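(* Consider graphs of maximum degree $4$ with ports numbered $1,2,3,4$, and the following protocol. For each node $v$ on a fixed shortest path from the source $s$ to the treasure $t$ (of length $D$), other than $t$, the oracle places at $v$ a quantum pebble emitting qubits in state $\psi_i$, where $i$ is the port at $v$ of the next edge of the path and $\psi_1=|0\rangle$, $\psi_2=|1\rangle$, $\psi_3=|+\rangle$, $\psi_4=|-\rangle$ (with $|\pm\rangle=(|0\rangle\pm|1\rangle)/\sqrt2$). At each node the agent measures $n$ emitted qubits in the computational basis $\{|0\rangle,|1\rangle\}$ and $n$ emitted qubits in the sign basis $\{|+\rangle,|-\rangle\}$; if exactly one of the two bases yields the same outcome in all $n$ measurements, the agent takes the port corresponding to that outcome ($0\mapsto1$, $1\mapsto2$, $+\mapsto3$, $-\mapsto4$), and if both bases yield uniform outcome strings the search fails. If $n=O(\log D)$ (measurements in each of the two bases at each node of the shortest path), then the probability that the agent reaches the treasure in $D$ steps is close to $1$ (it tends to $1$ as $D\to\infty$).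
   Context: Anonymous graph: connected simple undirected graph with unlabelled nodes, edges at each node carrying distinct local port numbers. The agent is oblivious (no memory between rounds) and in each round can traverse at most one edge. A quantum pebble is a source placed at a node by an oracle that repeatedly emits qubits, all in the same quantum state, which is unknown to the agent; the agent can obtain arbitrarily many copies and perform projective single-qubit measurements on them. *)

theory Defs
  imports "HOL-Probability.Probability"
begin

text \<open>A graph on vertex type 'v is given by its port function: nbr v p = Some u iff the
  edge at v with local port number p leads to u.\<close>

definition adj :: "('v \<Rightarrow> nat \<Rightarrow> 'v option) \<Rightarrow> 'v \<Rightarrow> 'v \<Rightarrow> bool" where
  "adj nbr u v \<longleftrightarrow> (\<exists>p. nbr u p = Some v)"

definition is_walk :: "('v \<Rightarrow> nat \<Rightarrow> 'v option) \<Rightarrow> 'v list \<Rightarrow> 'v \<Rightarrow> 'v \<Rightarrow> bool" where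
  "is_walk nbr w u v \<longleftrightarrow> w \<noteq> [] \<and> hd w = u \<and> last w = v \<and>
     (\<forall>i. Suc i < length w \<longrightarrow> adj nbr (w ! i) (w ! Suc i))"

definition port_graph4 :: "('v \<Rightarrow> nat \<Rightarrow> 'v option) \<Rightarrow> bool" where
  "port_graph4 nbr \<longleftrightarrow>
     (\<forall>v. \<exists>d\<le>4. \<forall>p. nbr v p \<noteq> None \<longleftrightarrow> 1 \<le> p \<and> p \<le> d) \<and>
     (\<forall>v p q. nbr v p \<noteq> None \<and> nbr v p = nbr v q \<longrightarrow> p = q) \<and>
     (\<forall>v p. nbr v p \<noteq> Some v) \<and>
     (\<forall>u v. adj nbr u v \<longrightarrow> adj nbr v u) \<and>
     (\<forall>u v. \<exists>w. is_walk nbr w u v)"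

definition shortest_path :: "('v \<Rightarrow> nat \<Rightarrow> 'v option) \<Rightarrow> 'v \<Rightarrow> 'v \<Rightarrow> 'v list \<Rightarrow> bool" where
  "shortest_path nbr s t P \<longleftrightarrow> is_walk nbr P s t \<and>
     (\<forall>w. is_walk nbr w s t \<longrightarrow> length P \<le> length w)"

definition port_to :: "('v \<Rightarrow> nat \<Rightarrow> 'v option) \<Rightarrow> 'v \<Rightarrow> 'v \<Rightarrow> nat" where
  "port_to nbr u v = (THE p. nbr u p = Some v)"

type_synonym qubit = "complex \<times> complex"

definition ket0 :: qubit where "ket0 = (1, 0)"
definition ket1 :: qubit where "ket1 = (0, 1)"
definition ketp :: qubit where "ketp = (complex_of_real (1 / sqrt 2), complex_of_real (1 / sqrt 2))"
definition ketm :: qubit where "ketm = (complex_of_real (1 / sqrt 2), - complex_of_real (1 / sqrt 2))"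

definition braket :: "qubit \<Rightarrow> qubit \<Rightarrow> complex" where
  "braket b \<psi> = cnj (fst b) * fst \<psi> + cnj (snd b) * snd \<psi>"

text \<open>Projective measurement of state psi in orthonormal basis (b0, b1);
  outcome False = b0, True = b1; Born rule.\<close>
definition measure_qubit :: "qubit \<times> qubit \<Rightarrow> qubit \<Rightarrow> bool pmf" where
  "measure_qubit B \<psi> = bernoulli_pmf ((cmod (braket (snd B) \<psi>))\<^sup>2)"

definition comp_basis :: "qubit \<times> qubit" where "comp_basis = (ket0, ket1)"
definition sign_basis :: "qubit \<times> qubit" where "sign_basis = (ketp, ketm)"

text \<open>n independent measurements (on n fresh copies).\<close>
primrec repeat_pmf :: "nat \<Rightarrow> 'a pmf \<Rightarrow> 'a list pmf" where
  "repeat_pmf 0 M = return_pmf []"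
| "repeat_pmf (Suc n) M = do { x \<leftarrow> M; xs \<leftarrow> repeat_pmf n M; return_pmf (x # xs) }"

definition psi :: "nat \<Rightarrow> qubit" where
  "psi i = (if i = 1 then ket0 else if i = 2 then ket1 else if i = 3 then ketp else ketm)"

definition pebbles :: "('v \<Rightarrow> nat \<Rightarrow> 'v option) \<Rightarrow> 'v list \<Rightarrow> 'v \<Rightarrow> qubit option" where
  "pebbles nbr P v =
     (if \<exists>i. Suc i < length P \<and> P ! i = v
      then (let i = (THE i. Suc i < length P \<and> P ! i = v)
            in Some (psi (port_to nbr v (P ! Suc i))))
      else None)"

definition uniform :: "bool list \<Rightarrow> bool" where
  "uniform xs \<longleftrightarrow> (\<forall>x\<in>set xs. x = hd xs)"

definition decide :: "bool list \<Rightarrow> bool list \<Rightarrow> nat option" where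
  "decide xs ys =
     (if uniform xs \<and> \<not> uniform ys then Some (if hd xs then 2 else 1)
      else if uniform ys \<and> \<not> uniform xs then Some (if hd ys then 4 else 3)
      else None)"

text \<open>One round of the oblivious agent; None = search failed. At the treasure it stops.\<close>
definition agent_step :: "('v \<Rightarrow> nat \<Rightarrow> 'v option) \<Rightarrow> ('v \<Rightarrow> qubit option) \<Rightarrow> 'v \<Rightarrow> nat
    \<Rightarrow> 'v option \<Rightarrow> 'v option pmf" where
  "agent_step nbr peb t n x =
     (case x of None \<Rightarrow> return_pmf None
      | Some v \<Rightarrow>
         if v = t then return_pmf (Some t)
         else (case peb v of None \<Rightarrow> return_pmf None
               | Some \<psi> \<Rightarrow> do {
                   xs \<leftarrow> repeat_pmf n (measure_qubit comp_basis \<psi>);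
                   ys \<leftarrow> repeat_pmf n (measure_qubit sign_basis \<psi>);
                   return_pmf (case decide xs ys of None \<Rightarrow> None | Some p \<Rightarrow> nbr v p) }))"

primrec agent_run :: "('v \<Rightarrow> nat \<Rightarrow> 'v option) \<Rightarrow> ('v \<Rightarrow> qubit option) \<Rightarrow> 'v \<Rightarrow> 'v \<Rightarrow> nat
    \<Rightarrow> nat \<Rightarrow> 'v option pmf" where
  "agent_run nbr peb s t n 0 = return_pmf (Some s)"
| "agent_run nbr peb s t n (Suc k) = agent_run nbr peb s t n k \<bind> agent_step nbr peb t n"

text \<open>Probability of being at the treasure after D rounds (= of reaching it within D steps).\<close>
definition success_prob :: "('v \<Rightarrow> nat \<Rightarrow> 'v option) \<Rightarrow> 'v \<Rightarrow> 'v \<Rightarrow> 'v list \<Rightarrow> nat \<Rightarrow> real" where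
  "success_prob nbr s t P n =
     pmf (agent_run nbr (pebbles nbr P) s t n (length P - 1)) (Some t)"

end

theory Submission imports Defs begin

lemma pmf_bind_ge: "pmf (bind_pmf A f) x \<ge> pmf A a * pmf (f a) x"
proof -
  have "(\<integral>y. pmf (f y) x * indicator {a} y \<partial>measure_pmf A) \<le> (\<integral>y. pmf (f y) x \<partial>measure_pmf A)"
    apply (rule integral_mono)
      apply (rule measure_pmf.integrable_const_bound[where B=1])
       apply (auto simp: pmf_le_1 indicator_def)
    apply (rule measure_pmf.integrable_const_bound[where B=1])
      apply (auto simp: pmf_le_1)
    done
  moreover have "(\<integral>y. pmf (f y) x * indicator {a} y \<partial>measure_pmf A) = pmf (f a) x * pmf A a"
    by (subst integral_measure_pmf_real[where A="{a}"]) (auto simp: indicator_def)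
  ultimately show ?thesis by (simp add: pmf_bind mult.commute)
qed

lemma repeat_Suc_pair: "repeat_pmf (Suc n) M = map_pmf (\<lambda>(x,xs). x # xs) (pair_pmf M (repeat_pmf n M))"
  by (simp add: pair_pmf_def map_bind_pmf)

lemma pmf_repeat_Cons: "pmf (repeat_pmf (Suc n) M) (x # xs) = pmf M x * pmf (repeat_pmf n M) xs"
proof -
  have inj: "inj (\<lambda>(x::'a, xs). x # xs)" by (auto simp: inj_def)
  show ?thesis unfolding repeat_Suc_pair
    using pmf_map_inj'[OF inj, of "pair_pmf M (repeat_pmf n M)" "(x,xs)"] by (simp add: pmf_pair)
qed

lemma pmf_repeat_replicate: "pmf (repeat_pmf n M) (replicate n b) = pmf M b ^ n"
  by (induction n) (simp_all del: repeat_pmf.simps(2) add: pmf_repeat_Cons)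

lemma set_repeat: "set_pmf (repeat_pmf n M) \<subseteq> {xs. length xs = n}"
  by (induction n) auto

lemma repeat_return: "repeat_pmf n (return_pmf b) = return_pmf (replicate n b)"
  by (induction n) (simp_all add: bind_return_pmf)

lemma uniform_rep: "uniform xs \<Longrightarrow> xs = replicate (length xs) (hd xs)"
  unfolding uniform_def by (simp add: replicate_length_same)

lemma uniform_replicate: "uniform (replicate n b)"
  by (simp add: uniform_def)

lemma uniform_Cons_rep: "uniform (b # replicate m b)"
  by (simp add: uniform_def)

lemma prob_uniform:
  "measure (measure_pmf (repeat_pmf n (bernoulli_pmf (1/2)))) {ys. uniform ys} \<le> 2 / 2^n"
proof (cases n)
  case 0
  then show ?thesis by (simp add: indicator_def)
next
  case (Suc m)
  let ?R = "repeat_pmf n (bernoulli_pmf (1/2))"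
  have sub: "{ys. uniform ys} \<inter> set_pmf ?R \<subseteq> {replicate n True, replicate n False}"
  proof
    fix ys assume "ys \<in> {ys. uniform ys} \<inter> set_pmf ?R"
    then have u: "uniform ys" and l: "length ys = n" using set_repeat by auto
    then have "ys = replicate n (hd ys)" using uniform_rep by metis
    then show "ys \<in> {replicate n True, replicate n False}" by (cases "hd ys") auto
  qed
  have "measure ?R {ys. uniform ys} = measure ?R ({ys. uniform ys} \<inter> set_pmf ?R)"
    by (simp add: measure_Int_set_pmf)
  also have "\<dots> \<le> measure ?R {replicate n True, replicate n False}"
    by (rule measure_pmf.finite_measure_mono[OF sub]) simp
  also have "\<dots> = pmf ?R (replicate n True) + pmf ?R (replicate n False)"
    using Suc by (simp add: measure_measure_pmf_finite)
  also have "\<dots> = 2 / 2^n" by (simp add: pmf_repeat_replicate power_one_over)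
  finally show ?thesis .
qed

lemma bern0: "bernoulli_pmf 0 = return_pmf False"
  by (rule pmf_eqI) (case_tac i, auto)
lemma bern1: "bernoulli_pmf 1 = return_pmf True"
  by (rule pmf_eqI) (case_tac i, auto)

lemma sq_half: "(1 / sqrt 2) ^ 2 = (1/2::real)"
  by (simp add: power_divide)

lemma cmod_half: "(cmod (1 / complex_of_real (sqrt 2)))\<^sup>2 = 1/2"
  by (simp add: norm_divide power_divide)

lemma meas_vals:
  "measure_qubit comp_basis ket0 = return_pmf False"
  "measure_qubit comp_basis ket1 = return_pmf True"
  "measure_qubit comp_basis ketp = bernoulli_pmf (1/2)"
  "measure_qubit comp_basis ketm = bernoulli_pmf (1/2)"
  "measure_qubit sign_basis ket0 = bernoulli_pmf (1/2)"
  "measure_qubit sign_basis ket1 = bernoulli_pmf (1/2)"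
  "measure_qubit sign_basis ketp = return_pmf False"
  "measure_qubit sign_basis ketm = return_pmf True"
  by (simp_all add: measure_qubit_def comp_basis_def sign_basis_def ket0_def ket1_def ketp_def ketm_def
      braket_def bern0 bern1 cmod_half flip: of_real_mult)

lemma map_bound:
  assumes "\<And>ys. \<not> uniform ys \<Longrightarrow> h ys = x"
  shows "pmf (map_pmf h R) x \<ge> 1 - measure (measure_pmf R) {ys. uniform ys}"
proof -
  have "measure (measure_pmf R) (- {ys. uniform ys}) \<le> measure (measure_pmf R) (h -` {x})"
    by (rule measure_pmf.finite_measure_mono) (use assms in auto)
  then show ?thesis by (simp add: pmf_map measure_pmf.prob_compl[symmetric] Compl_eq_Diff_UNIV)
qed

lemma step_bound:
  assumes "v \<noteq> t" "peb v = Some (psi k)" "nbr v k = Some w" "k \<in> {1,2,3,4}"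
  shows "pmf (agent_step nbr peb t n (Some v)) (Some w) \<ge> 1 - 2/2^n"
proof (cases "n = 0")
  case True
  have "0 \<le> pmf (agent_step nbr peb t n (Some v)) (Some w)" by (rule pmf_nonneg)
  moreover have "1 - 2/2^n \<le> (0::real)" using True by simp
  ultimately show ?thesis by linarith
next
  case False
  then obtain m where n: "n = Suc m" by (cases n) auto
  let ?R = "repeat_pmf n (bernoulli_pmf (1/2))"
  from assms(4) consider "k = 1" | "k = 2" | "k = 3" | "k = 4" by auto
  then show ?thesis
  proof cases
    case 1
    have "agent_step nbr peb t n (Some v) = map_pmf (\<lambda>ys. case decide (replicate n False) ys of None \<Rightarrow> None | Some p \<Rightarrow> nbr v p) ?R"
      using assms 1 by (simp add: agent_step_def psi_def meas_vals repeat_return bind_return_pmf map_pmf_def)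
    moreover have "pmf (map_pmf (\<lambda>ys. case decide (replicate n False) ys of None \<Rightarrow> None | Some p \<Rightarrow> nbr v p) ?R) (Some w) \<ge> 1 - measure ?R {ys. uniform ys}"
      by (rule map_bound) (use assms 1 n in \<open>auto simp: decide_def uniform_replicate uniform_Cons_rep\<close>)
    ultimately show ?thesis using prob_uniform[of n] by simp
  next
    case 2
    have "agent_step nbr peb t n (Some v) = map_pmf (\<lambda>ys. case decide (replicate n True) ys of None \<Rightarrow> None | Some p \<Rightarrow> nbr v p) ?R"
      using assms 2 by (simp add: agent_step_def psi_def meas_vals repeat_return bind_return_pmf map_pmf_def)
    moreover have "pmf (map_pmf (\<lambda>ys. case decide (replicate n True) ys of None \<Rightarrow> None | Some p \<Rightarrow> nbr v p) ?R) (Some w) \<ge> 1 - measure ?R {ys. uniform ys}"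
      by (rule map_bound) (use assms 2 n in \<open>auto simp: decide_def uniform_replicate uniform_Cons_rep\<close>)
    ultimately show ?thesis using prob_uniform[of n] by simp
  next
    case 3
    have "agent_step nbr peb t n (Some v) = map_pmf (\<lambda>xs. case decide xs (replicate n False) of None \<Rightarrow> None | Some p \<Rightarrow> nbr v p) ?R"
      using assms 3 by (simp add: agent_step_def psi_def meas_vals repeat_return bind_return_pmf map_pmf_def)
    moreover have "pmf (map_pmf (\<lambda>xs. case decide xs (replicate n False) of None \<Rightarrow> None | Some p \<Rightarrow> nbr v p) ?R) (Some w) \<ge> 1 - measure ?R {ys. uniform ys}"
      by (rule map_bound) (use assms 3 n in \<open>auto simp: decide_def uniform_replicate uniform_Cons_rep\<close>)
    ultimately show ?thesis using prob_uniform[of n] by simp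
  next
    case 4
    have "agent_step nbr peb t n (Some v) = map_pmf (\<lambda>xs. case decide xs (replicate n True) of None \<Rightarrow> None | Some p \<Rightarrow> nbr v p) ?R"
      using assms 4 by (simp add: agent_step_def psi_def meas_vals repeat_return bind_return_pmf map_pmf_def)
    moreover have "pmf (map_pmf (\<lambda>xs. case decide xs (replicate n True) of None \<Rightarrow> None | Some p \<Rightarrow> nbr v p) ?R) (Some w) \<ge> 1 - measure ?R {ys. uniform ys}"
      by (rule map_bound) (use assms 4 n in \<open>auto simp: decide_def uniform_replicate uniform_Cons_rep\<close>)
    ultimately show ?thesis using prob_uniform[of n] by simp
  qed
qed

lemma sp_distinct:
  assumes sp: "shortest_path nbr s t P"
  shows "distinct P"
proof (rule ccontr)
  assume "\<not> distinct P"
  then obtain i j where ij: "i < j" "j < length P" "P ! i = P ! j"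
    by (metis distinct_conv_nth linorder_neqE_nat)
  have W: "is_walk nbr P s t" and M: "\<And>w. is_walk nbr w s t \<Longrightarrow> length P \<le> length w"
    using sp by (auto simp: shortest_path_def)
  have ne: "P \<noteq> []" and hdP: "hd P = s" and lastP: "last P = t"
    and A: "\<And>m. Suc m < length P \<Longrightarrow> adj nbr (P ! m) (P ! Suc m)"
    using W by (auto simp: is_walk_def)
  define w where "w = take i P @ drop j P"
  have lw: "length w = i + (length P - j)" using ij by (simp add: w_def)
  have nth_w: "\<And>m. m < length w \<Longrightarrow> w ! m = (if m < i then P ! m else P ! (m - i + j))"
    using ij by (auto simp: w_def nth_append) (metis add.commute)
  have "is_walk nbr w s t"
    unfolding is_walk_def
  proof (intro conjI allI impI)
    show "w \<noteq> []" using ij by (simp add: w_def)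
    show "hd w = s"
    proof (cases "i = 0")
      case True
      then show ?thesis using ij hdP ne by (simp add: w_def hd_drop_conv_nth hd_conv_nth)
    next
      case False
      then show ?thesis using ij hdP ne by (simp add: w_def hd_append)
    qed
    show "last w = t" using ij lastP by (simp add: w_def)
    fix m assume m: "Suc m < length w"
    show "adj nbr (w ! m) (w ! Suc m)"
    proof (cases "Suc m < i")
      case True
      then show ?thesis using m nth_w A ij by simp
    next
      case False
      show ?thesis
      proof (cases "m < i")
        case True
        with False have "Suc m = i" by simp
        then have "w ! m = P ! m" "w ! Suc m = P ! Suc m" using nth_w m True ij by auto
        moreover have "Suc m < length P" using \<open>Suc m = i\<close> ij by simp
        ultimately show ?thesis using A by simp
      next
        case F2: False
        have "Suc (m - i + j) < length P" using m lw F2 by simp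
        then have "adj nbr (P ! (m - i + j)) (P ! Suc (m - i + j))" by (rule A)
        moreover have "Suc m - i + j = Suc (m - i + j)" using F2 by simp
        ultimately show ?thesis using m nth_w F2 False by simp
      qed
    qed
  qed
  then have "length P \<le> length w" by (rule M)
  then show False using lw ij by simp
qed

lemma port_lemma:
  assumes g: "port_graph4 nbr" and a: "adj nbr u v"
  shows "nbr u (port_to nbr u v) = Some v \<and> port_to nbr u v \<in> {1,2,3,4}"
proof -
  obtain p where p: "nbr u p = Some v" using a by (auto simp: adj_def)
  have inj: "\<And>q. nbr u q = Some v \<Longrightarrow> q = p"
    using g p unfolding port_graph4_def by (metis option.distinct(1))
  have pt: "port_to nbr u v = p" unfolding port_to_def
    using p inj by (rule the_equality)
  obtain d where d: "d \<le> 4" "\<And>q. nbr u q \<noteq> None \<longleftrightarrow> 1 \<le> q \<and> q \<le> d"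
    using g unfolding port_graph4_def by blast
  have "1 \<le> p" "p \<le> 4" using d p by (metis option.distinct(1) order_trans)+
  then have "p \<in> {1,2,3,4}" by auto
  then show ?thesis using pt p by simp
qed

lemma pebbles_at:
  assumes "distinct P" "Suc i < length P"
  shows "pebbles nbr P (P ! i) = Some (psi (port_to nbr (P ! i) (P ! Suc i)))"
proof -
  have th: "(THE j. Suc j < length P \<and> P ! j = P ! i) = i"
    by (rule the_equality) (use assms in \<open>auto simp: nth_eq_iff_index_eq\<close>)
  have ex: "\<exists>j. Suc j < length P \<and> P ! j = P ! i" using assms by blast
  show ?thesis unfolding pebbles_def Let_def th using ex by (simp only: if_True)
qed

lemma arith_step:
  fixes p q e :: real and j :: nat
  assumes "0 \<le> p" "0 \<le> q" "0 \<le> e" "1 - real j * e \<le> p" "1 - e \<le> q"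
  shows "1 - (real j + 1) * e \<le> p * q"
proof (cases "1 - j * e \<le> 0")
  case True
  have "0 \<le> p * q" using assms by simp
  then show ?thesis using True assms(3) by (simp add: algebra_simps)
next
  case False
  have "(1 - j * e) * (1 - e) \<le> (1 - j * e) * q" using False assms by (intro mult_left_mono) auto
  also have "\<dots> \<le> p * q" using assms by (intro mult_right_mono) auto
  finally have "(1 - j * e) * (1 - e) \<le> p * q" .
  moreover have "1 - (real j + 1) * e \<le> (1 - real j * e) * (1 - e)"
    using assms(3) by (simp add: algebra_simps)
  ultimately show ?thesis by linarith
qed

lemma run_bound:
  assumes H: "\<And>i. i < D \<Longrightarrow> P ! i \<noteq> t \<and> peb (P ! i) = Some (psi (k i)) \<and>
                nbr (P ! i) (k i) = Some (P ! Suc i) \<and> k i \<in> {1,2,3,4}"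
    and s: "P ! 0 = s"
  shows "j \<le> D \<Longrightarrow> pmf (agent_run nbr peb s t n j) (Some (P ! j)) \<ge> 1 - j * (2 / 2^n)"
proof (induction j)
  case 0
  then show ?case using s by simp
next
  case (Suc j)
  have jD: "j < D" using Suc by simp
  have IH: "1 - j * (2 / 2^n) \<le> pmf (agent_run nbr peb s t n j) (Some (P ! j))"
    using Suc jD by simp
  have st: "1 - 2/2^n \<le> pmf (agent_step nbr peb t n (Some (P ! j))) (Some (P ! Suc j))"
    using H[OF jD] by (intro step_bound) auto
  have "pmf (agent_run nbr peb s t n j) (Some (P ! j)) * pmf (agent_step nbr peb t n (Some (P ! j))) (Some (P ! Suc j))
     \<le> pmf (agent_run nbr peb s t n (Suc j)) (Some (P ! Suc j))"
    by (simp only: agent_run.simps) (rule pmf_bind_ge)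
  moreover have "1 - (real j + 1) * (2 / 2^n) \<le> pmf (agent_run nbr peb s t n j) (Some (P ! j)) * pmf (agent_step nbr peb t n (Some (P ! j))) (Some (P ! Suc j))"
    by (rule arith_step[OF pmf_nonneg pmf_nonneg _ IH st]) simp
  ultimately have "1 - (real j + 1) * (2 / 2^n) \<le> pmf (agent_run nbr peb s t n (Suc j)) (Some (P ! Suc j))"
    by linarith
  moreover have "real (Suc j) = real j + 1" by simp
  ultimately show ?case by metis
qed

lemma success_bound:
  assumes g: "port_graph4 nbr" and sp: "shortest_path nbr s t P"
  shows "success_prob nbr s t P m \<ge> 1 - real (length P - 1) * (2 / 2^m)"
proof -
  have dist: "distinct P" using sp by (rule sp_distinct)
  have W: "P \<noteq> []" "hd P = s" "last P = t" "\<And>i. Suc i < length P \<Longrightarrow> adj nbr (P ! i) (P ! Suc i)"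
    using sp by (auto simp: shortest_path_def is_walk_def)
  define D where "D = length P - 1"
  have tD: "P ! D = t" using W by (simp add: D_def last_conv_nth)
  define k where "k i = port_to nbr (P ! i) (P ! Suc i)" for i
  have H: "P ! i \<noteq> t \<and> pebbles nbr P (P ! i) = Some (psi (k i)) \<and>
                nbr (P ! i) (k i) = Some (P ! Suc i) \<and> k i \<in> {1,2,3,4}" if "i < D" for i
  proof -
    have i: "Suc i < length P" using that D_def by simp
    have "P ! i \<noteq> P ! D" using dist i that D_def by (simp add: nth_eq_iff_index_eq)
    then show ?thesis using tD pebbles_at[OF dist i] port_lemma[OF g W(4)[OF i]] k_def by simp
  qed
  have s: "P ! 0 = s" using W by (simp add: hd_conv_nth)
  have "1 - D * (2 / 2^m) \<le> pmf (agent_run nbr (pebbles nbr P) s t m D) (Some (P ! D))"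
    by (rule run_bound[OF H s]) auto
  then show ?thesis unfolding success_prob_def using tD D_def by simp
qed

theorem lemma4:
  "\<exists>c>0. \<forall>n :: nat \<Rightarrow> nat. (\<forall>D. c * ln (real D) \<le> real (n D)) \<longrightarrow>
     (\<exists>f :: nat \<Rightarrow> real. (f \<longlongrightarrow> 1) at_top \<and>
        (\<forall>(nbr :: 'v \<Rightarrow> nat \<Rightarrow> 'v option) s t P D.
           port_graph4 nbr \<and> shortest_path nbr s t P \<and> D = length P - 1 \<longrightarrow>
           f D \<le> success_prob nbr s t P (n D)))"
proof (intro exI[of _ "2 / ln 2"] conjI allI impI)
  show "(0::real) < 2 / ln 2" by simp
  fix n :: "nat \<Rightarrow> nat"
  assume hn: "\<forall>D. 2 / ln 2 * ln (real D) \<le> real (n D)"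
  have key: "1 - 2 / real D \<le> 1 - real D * (2 / 2 ^ n D)" for D
  proof (cases "D = 0")
    case True then show ?thesis by simp
  next
    case False
    then have Dpos: "0 < real D" by simp
    have "2 / ln 2 * ln (real D) \<le> real (n D)" using hn by blast
    then have "2 * ln (real D) \<le> real (n D) * ln 2" by (simp add: field_simps)
    then have "ln (real D ^ 2) \<le> ln (2 ^ n D)" using Dpos by (simp add: ln_realpow)
    then have sq: "real D ^ 2 \<le> 2 ^ n D" using Dpos by simp
    have "real D * (2 / 2 ^ n D) = 2 * real D / 2 ^ n D" by simp
    also have "\<dots> \<le> 2 * real D / real D ^ 2"
      using sq Dpos by (intro divide_left_mono) auto
    also have "\<dots> = 2 / real D" by (simp add: power2_eq_square)
    finally show ?thesis by simp
  qed
  show "\<exists>f :: nat \<Rightarrow> real. (f \<longlongrightarrow> 1) at_top \<and>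
        (\<forall>(nbr :: 'v \<Rightarrow> nat \<Rightarrow> 'v option) s t P D.
           port_graph4 nbr \<and> shortest_path nbr s t P \<and> D = length P - 1 \<longrightarrow>
           f D \<le> success_prob nbr s t P (n D))"
  proof (intro exI[of _ "\<lambda>D. 1 - 2 / real D"] conjI allI impI)
    have "(\<lambda>D. 2 / real D) \<longlonglongrightarrow> 0" by (rule lim_const_over_n)
    from tendsto_diff[OF tendsto_const[of "1::real"] this]
    show "((\<lambda>D. 1 - 2 / real D) \<longlongrightarrow> 1) at_top" by simp
    fix nbr :: "'v \<Rightarrow> nat \<Rightarrow> 'v option" and s t P D
    assume a: "port_graph4 nbr \<and> shortest_path nbr s t P \<and> D = length P - 1"
    then have "1 - real D * (2 / 2 ^ n D) \<le> success_prob nbr s t P (n D)"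
      using success_bound[of nbr s t P "n D"] by blast
    then show "1 - 2 / real D \<le> success_prob nbr s t P (n D)"
      using key[of D] by linarith
  qed
qed

end
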